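(* Let $\sigma\in\{1,-1\}$ and let $U$ be an open subset of the Weyl upper half-plane. Let $\natural$ be an involutive map on $n\times n$ matrix functions on $U$ (applied coefficientwise to matrix-valued one-forms) such that $(N_1N_2)^\natural=N_2^\natural N_1^\natural$, $(N_1+N_2)^\natural=N_1^\natural+N_2^\natural$, $(fN)^\natural=f^\natural N^\natural$ for scalar functions $f$, where $f\mapsto f^\natural$ is either the identity or complex conjugation, $\partial_\rho(N^\natural)=(\partial_\rho N)^\natural$, $\partial_v(N^\natural)=(\partial_vN)^\natural$, and $\natural$ commutes with $\star$. Let $V$ be an invertible $n\times n$ matrix function on $U$ of class $C^2$, set $M=V^\natural V$ and $A=M^{-1}dM$. Let $\varphi,\chi:U\to\mathbb{C}$ be $C^\infty$ functions, each of the form $\frac{-\sigma(\omega-v)\pm\sqrt{(\omega-v)^2+\sigma\rho^2}}{\rho}$ for some $\omega\in\mathbb{C}$ and a continuous branch of the square root, with $\varphi,\chi\ne0$ and $\varphi^2+\sigma,\chi^2+\sigma\neq0$ on $U$, and with $\chi=-\sigma/\varphi^\natural$. Let $X$ and $\widetilde X$ be invertible $n\times n$ matrix functions on $U$ of class $C^2$ (with $C^1$ inverses) solving $$\varphi\,(dX+AX)=\star dX,\qquad \chi\,(d\widetilde X+A\widetilde X)=\star d\widetilde X.$$ Then the matrix function $\mathcal{M}=\widetilde X^\natural\,M\,X$ satisfies $d\mathcal{M}=0$ on $U$.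
   Context: The Weyl upper half-plane is $\{(\rho,v)\in\mathbb{R}^2:\rho>0\}$. The Hodge star $\star$ acts on one-forms in $(\rho,v)$ (entrywise, linearly over functions) by $\star d\rho=-\sigma\,dv$, $\star dv=d\rho$. Examples of $\natural$: $N^\natural=N^T$, or $N^\natural=\eta N^\dagger\eta^{-1}$ for a constant invertible matrix $\eta$. *)

theory Defs
  imports "HOL-Analysis.Analysis"
begin

text \<open>Points of the Weyl upper half-plane are pairs (rho, v) :: real \<times> real.
  A (matrix-valued) one-form P d rho + Q dv is represented, pointwise, by the
  pair of coefficients (P, Q).\<close>

definition has_pd_rho :: "(real \<times> real \<Rightarrow> 'a::real_normed_vector) \<Rightarrow> 'a \<Rightarrow> real \<times> real \<Rightarrow> bool" where
  "has_pd_rho f D p \<longleftrightarrow> ((\<lambda>t. f (t, snd p)) has_vector_derivative D) (at (fst p))"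

definition has_pd_v :: "(real \<times> real \<Rightarrow> 'a::real_normed_vector) \<Rightarrow> 'a \<Rightarrow> real \<times> real \<Rightarrow> bool" where
  "has_pd_v f D p \<longleftrightarrow> ((\<lambda>t. f (fst p, t)) has_vector_derivative D) (at (snd p))"

definition pd_rho :: "(real \<times> real \<Rightarrow> 'a::real_normed_vector) \<Rightarrow> real \<times> real \<Rightarrow> 'a" where
  "pd_rho f p = vector_derivative (\<lambda>t. f (t, snd p)) (at (fst p))"

definition pd_v :: "(real \<times> real \<Rightarrow> 'a::real_normed_vector) \<Rightarrow> real \<times> real \<Rightarrow> 'a" where
  "pd_v f p = vector_derivative (\<lambda>t. f (fst p, t)) (at (snd p))"

text \<open>Iterated partial derivatives: True = d/d rho, False = d/dv.\<close>
fun iter_pd :: "bool list \<Rightarrow> (real \<times> real \<Rightarrow> 'a::real_normed_vector) \<Rightarrow> real \<times> real \<Rightarrow> 'a" where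
  "iter_pd [] f = f"
| "iter_pd (b # bs) f = (if b then pd_rho (iter_pd bs f) else pd_v (iter_pd bs f))"

text \<open>Class C^k on an open set U: all partial derivatives of order \<le> k exist on U
  and are continuous on U.\<close>
definition Ck_on :: "nat \<Rightarrow> (real \<times> real) set \<Rightarrow> (real \<times> real \<Rightarrow> 'a::real_normed_vector) \<Rightarrow> bool" where
  "Ck_on k U f \<longleftrightarrow> (\<forall>bs. length bs \<le> k \<longrightarrow>
      continuous_on U (iter_pd bs f) \<and>
      (length bs < k \<longrightarrow> (\<forall>p\<in>U. (\<exists>D. has_pd_rho (iter_pd bs f) D p) \<and> (\<exists>D. has_pd_v (iter_pd bs f) D p))))"

definition smooth_on :: "(real \<times> real) set \<Rightarrow> (real \<times> real \<Rightarrow> 'a::real_normed_vector) \<Rightarrow> bool" where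
  "smooth_on U f \<longleftrightarrow> (\<forall>k. Ck_on k U f)"

text \<open>Exterior derivative of a function, as a one-form (coefficients of d rho, dv).\<close>
definition dform :: "(real \<times> real \<Rightarrow> 'a::real_normed_vector) \<Rightarrow> real \<times> real \<Rightarrow> 'a \<times> 'a" where
  "dform f p = (pd_rho f p, pd_v f p)"

text \<open>Hodge star: star d rho = - sigma dv, star dv = d rho.
  So star (P d rho + Q dv) = Q d rho - sigma P dv.\<close>
definition hstar :: "real \<Rightarrow> 'a::real_vector \<times> 'a \<Rightarrow> 'a \<times> 'a" where
  "hstar \<sigma> w = (snd w, (- \<sigma>) *\<^sub>R fst w)"

text \<open>Scalar (complex) multiple of a matrix.\<close>
definition cscale :: "complex \<Rightarrow> complex^'n^'n \<Rightarrow> complex^'n^'n" where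
  "cscale c N = (\<chi> i j. c * N $ i $ j)"

text \<open>Applying the involution coefficientwise to a matrix-valued one-form.\<close>
definition form_nat :: "((real \<times> real \<Rightarrow> complex^'n^'n) \<Rightarrow> (real \<times> real \<Rightarrow> complex^'n^'n))
    \<Rightarrow> (real \<times> real \<Rightarrow> (complex^'n^'n) \<times> (complex^'n^'n)) \<Rightarrow> real \<times> real \<Rightarrow> (complex^'n^'n) \<times> (complex^'n^'n)" where
  "form_nat nt \<omega> p = (nt (\<lambda>q. fst (\<omega> q)) p, nt (\<lambda>q. snd (\<omega> q)) p)"

text \<open>Conditions on the involution nt (with scalar part sc) on matrix functions on U.\<close>
definition natural_inv :: "(real \<times> real) set \<Rightarrow> real \<Rightarrow> (complex \<Rightarrow> complex)
    \<Rightarrow> ((real \<times> real \<Rightarrow> complex^'n^'n) \<Rightarrow> (real \<times> real \<Rightarrow> complex^'n^'n)) \<Rightarrow> bool" where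
  "natural_inv U \<sigma> sc nt \<longleftrightarrow>
     (sc = id \<or> sc = cnj) \<and>
     \<comment> \<open>a map on functions on U (only values on U matter)\<close>
     (\<forall>N1 N2. (\<forall>p\<in>U. N1 p = N2 p) \<longrightarrow> (\<forall>p\<in>U. nt N1 p = nt N2 p)) \<and>
     (\<forall>N. \<forall>p\<in>U. nt (nt N) p = N p) \<and>
     (\<forall>N1 N2. \<forall>p\<in>U. nt (\<lambda>q. N1 q ** N2 q) p = nt N2 p ** nt N1 p) \<and>
     (\<forall>N1 N2. \<forall>p\<in>U. nt (\<lambda>q. N1 q + N2 q) p = nt N1 p + nt N2 p) \<and>
     (\<forall>f N. \<forall>p\<in>U. nt (\<lambda>q. cscale (f q) (N q)) p = cscale (sc (f p)) (nt N p)) \<and>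
     (\<forall>N. (\<forall>p\<in>U. \<exists>D. has_pd_rho N D p) \<longrightarrow> (\<forall>p\<in>U. has_pd_rho (nt N) (nt (pd_rho N) p) p)) \<and>
     (\<forall>N. (\<forall>p\<in>U. \<exists>D. has_pd_v N D p) \<longrightarrow> (\<forall>p\<in>U. has_pd_v (nt N) (nt (pd_v N) p) p)) \<and>
     (\<forall>\<omega>. \<forall>p\<in>U. form_nat nt (\<lambda>q. hstar \<sigma> (\<omega> q)) p = hstar \<sigma> (form_nat nt \<omega> p))"

text \<open>phi = (- sigma (w - v) + s)/rho with s a continuous branch of
  sqrt((w - v)^2 + sigma rho^2) on U (the sign +- is absorbed into the branch).\<close>
definition sqrt_branch_form :: "(real \<times> real) set \<Rightarrow> real \<Rightarrow> (real \<times> real \<Rightarrow> complex) \<Rightarrow> bool" where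
  "sqrt_branch_form U \<sigma> \<phi> \<longleftrightarrow> (\<exists>\<omega>::complex. \<exists>s. continuous_on U s \<and>
      (\<forall>p\<in>U. (s p)\<^sup>2 = (\<omega> - of_real (snd p))\<^sup>2 + of_real \<sigma> * (of_real (fst p))\<^sup>2 \<and>
              \<phi> p = (- of_real \<sigma> * (\<omega> - of_real (snd p)) + s p) / of_real (fst p)))"

end

theory Submission
  imports Defs
begin



lemma mm_bilinear: "bilinear ((**) :: complex^'n::finite^'n \<Rightarrow> complex^'n^'n \<Rightarrow> complex^'n^'n)"
  unfolding bilinear_def
proof (intro conjI allI)
  fix x :: "complex^'n^'n"
  show "linear (\<lambda>y. x ** y)"
    by (rule linearI) (simp_all add: matrix_add_ldistrib vec_eq_iff matrix_matrix_mult_def sum_distrib_left scaleR_vec_def distrib_left sum.distrib scaleR_sum_right)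
  show "linear (\<lambda>y. y ** x)"
    by (rule linearI) (simp_all add: vec_eq_iff matrix_matrix_mult_def scaleR_vec_def distrib_right sum.distrib scaleR_sum_right)
qed

lemma mm_bb: "bounded_bilinear ((**) :: complex^'n::finite^'n \<Rightarrow> complex^'n^'n \<Rightarrow> complex^'n^'n)"
  using mm_bilinear bilinear_conv_bounded_bilinear by blast

lemma pd_rho_mult:
  fixes f g :: "real \<times> real \<Rightarrow> complex^'n::finite^'n"
  assumes "has_pd_rho f Df p" "has_pd_rho g Dg p"
  shows "has_pd_rho (\<lambda>q. f q ** g q) (f p ** Dg + Df ** g p) p"
  using bounded_bilinear.has_vector_derivative[OF mm_bb assms[unfolded has_pd_rho_def]]
  by (simp add: has_pd_rho_def)

lemma pd_v_mult:
  fixes f g :: "real \<times> real \<Rightarrow> complex^'n::finite^'n"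
  assumes "has_pd_v f Df p" "has_pd_v g Dg p"
  shows "has_pd_v (\<lambda>q. f q ** g q) (f p ** Dg + Df ** g p) p"
  using bounded_bilinear.has_vector_derivative[OF mm_bb assms[unfolded has_pd_v_def]]
  by (simp add: has_pd_v_def)

lemma pd_rho_transfer:
  assumes "open U" "p \<in> U" "\<forall>q\<in>U. f q = g q" "has_pd_rho f D p"
  shows "has_pd_rho g D p"
proof -
  have o: "open {t. (t, snd p) \<in> U}"
    using continuous_open_vimage[OF assms(1), of "\<lambda>t. (t, snd p)"] by (auto simp: vimage_def intro: continuous_intros)
  show ?thesis using assms(4) unfolding has_pd_rho_def
    by (rule has_vector_derivative_transform_within_open[OF _ o]) (use assms in auto)
qed

lemma pd_v_transfer:
  assumes "open U" "p \<in> U" "\<forall>q\<in>U. f q = g q" "has_pd_v f D p"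
  shows "has_pd_v g D p"
proof -
  have o: "open {t. (fst p, t) \<in> U}"
    using continuous_open_vimage[OF assms(1), of "\<lambda>t. (fst p, t)"] by (auto simp: vimage_def intro: continuous_intros)
  show ?thesis using assms(4) unfolding has_pd_v_def
    by (rule has_vector_derivative_transform_within_open[OF _ o]) (use assms in auto)
qed

lemma pd_rho_eq: "has_pd_rho f D p \<Longrightarrow> pd_rho f p = D"
  by (simp add: has_pd_rho_def pd_rho_def vector_derivative_at)
lemma pd_v_eq: "has_pd_v f D p \<Longrightarrow> pd_v f p = D"
  by (simp add: has_pd_v_def pd_v_def vector_derivative_at)
lemma pd_rho_uniq: "has_pd_rho f D p \<Longrightarrow> has_pd_rho f D' p \<Longrightarrow> D = D'"
  by (simp add: has_pd_rho_def vector_derivative_unique_at)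
lemma pd_v_uniq: "has_pd_v f D p \<Longrightarrow> has_pd_v f D' p \<Longrightarrow> D = D'"
  by (simp add: has_pd_v_def vector_derivative_unique_at)

lemma inv_mat:
  fixes A :: "complex^'n::finite^'n"
  assumes "invertible A" shows "A ** matrix_inv A = mat 1" "matrix_inv A ** A = mat 1"
  using someI_ex[OF assms[unfolded invertible_def]] unfolding matrix_inv_def by auto

lemma cscale_mult_right: "A ** cscale c B = cscale c (A ** B)"
  by (simp add: cscale_def matrix_matrix_mult_def vec_eq_iff sum_distrib_left mult.left_commute)
lemma cscale_mult_left: "cscale c A ** B = cscale c (A ** B)"
  by (simp add: cscale_def matrix_matrix_mult_def vec_eq_iff sum_distrib_left mult.assoc)

lemma mm_add_rdistrib: "((A::'a::semiring_1^'n::finite^'n) + B) ** C = A ** C + B ** C"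
  by (simp add: matrix_matrix_mult_def vec_eq_iff distrib_right sum.distrib)

lemma cscale_cscale: "cscale a (cscale b N) = cscale (a*b) N"
  by (simp add: cscale_def vec_eq_iff mult.assoc)
lemma cscale_one: "cscale 1 N = N"
  by (simp add: cscale_def vec_eq_iff)
lemma scaleR_cscale: "r *\<^sub>R (N::complex^'n^'n) = cscale (of_real r) N"
  by (simp add: cscale_def vec_eq_iff) (simp add: scaleR_conv_of_real)
lemma cscale_nth: "cscale c N $ i $ j = c * N $ i $ j"
  by (simp add: cscale_def)

lemma scalar_alg:
  fixes a b c e f s :: complex
  assumes s: "s * s = 1" and f: "f \<noteq> 0" "f^2 + s \<noteq> 0"
    and h1: "a + e/f = c - s * f*b" and h2: "b - s * c/f = e + f*a"
  shows "b - s * c/f = 0 \<and> a + e/f = 0"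
proof -
  have h1': "f*a + e = f*c - s * f*f*b" using h1 f by (simp add: field_simps)
  have h2': "f*b - s * c = f*e + f*f*a" using h2 f by (simp add: field_simps)
  have "f*b - s * c = f*(f*a + e)" using h2' by (simp add: algebra_simps)
  also have "\<dots> = f*(f*c - s * f*f*b)" using h1' by simp
  finally have "f*b - s * c = f*(f*c - s * f*f*b)" .
  hence "(f^2 + s) * (s * f*b - c) = 0"
    using s by (simp add: algebra_simps power2_eq_square)
  hence c: "c = s * f*b" using f by simp
  have "b - s * c/f = 0" using c s f by (simp add: field_simps)
  moreover have "a + e/f = 0" using h2 h1 c s f \<open>b - s * c/f = 0\<close> by (simp add: field_simps)
  ultimately show ?thesis by simp
qed


theorem mainTheorem8:
  fixes \<sigma> :: real and U :: "(real \<times> real) set"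
    and sc :: "complex \<Rightarrow> complex"
    and nt :: "(real \<times> real \<Rightarrow> complex^'n::finite^'n) \<Rightarrow> (real \<times> real \<Rightarrow> complex^'n^'n)"
    and V X Xt M :: "real \<times> real \<Rightarrow> complex^'n^'n"
    and A :: "real \<times> real \<Rightarrow> (complex^'n^'n) \<times> (complex^'n^'n)"
    and \<phi> chi :: "real \<times> real \<Rightarrow> complex"
  assumes sigma: "\<sigma> \<in> {1, -1}"
    and U_open: "open U" and U_half: "U \<subseteq> {p. fst p > 0}"
    and nt: "natural_inv U \<sigma> sc nt"
    and V_C2: "Ck_on 2 U V" and V_inv: "\<forall>p\<in>U. invertible (V p)"
    and M_def: "M = (\<lambda>p. nt V p ** V p)"
    and A_def: "A = (\<lambda>p. (matrix_inv (M p) ** pd_rho M p, matrix_inv (M p) ** pd_v M p))"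
    and phi_smooth: "smooth_on U \<phi>" and chi_smooth: "smooth_on U chi"
    and phi_form: "sqrt_branch_form U \<sigma> \<phi>" and chi_form: "sqrt_branch_form U \<sigma> chi"
    and phi_nz: "\<forall>p\<in>U. \<phi> p \<noteq> 0 \<and> (\<phi> p)\<^sup>2 + of_real \<sigma> \<noteq> 0"
    and chi_nz: "\<forall>p\<in>U. chi p \<noteq> 0 \<and> (chi p)\<^sup>2 + of_real \<sigma> \<noteq> 0"
    and chi_phi: "\<forall>p\<in>U. chi p = - of_real \<sigma> / sc (\<phi> p)"
    and X_C2: "Ck_on 2 U X" and X_inv: "\<forall>p\<in>U. invertible (X p)"
    and X_inv_C1: "Ck_on 1 U (\<lambda>p. matrix_inv (X p))"
    and Xt_C2: "Ck_on 2 U Xt" and Xt_inv: "\<forall>p\<in>U. invertible (Xt p)"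
    and Xt_inv_C1: "Ck_on 1 U (\<lambda>p. matrix_inv (Xt p))"
    and X_eq: "\<forall>p\<in>U.
       (cscale (\<phi> p) (fst (dform X p) + fst (A p) ** X p),
        cscale (\<phi> p) (snd (dform X p) + snd (A p) ** X p)) = hstar \<sigma> (dform X p)"
    and Xt_eq: "\<forall>p\<in>U.
       (cscale (chi p) (fst (dform Xt p) + fst (A p) ** Xt p),
        cscale (chi p) (snd (dform Xt p) + snd (A p) ** Xt p)) = hstar \<sigma> (dform Xt p)"
  shows "\<forall>p\<in>U. has_pd_rho (\<lambda>q. nt Xt q ** M q ** X q) 0 p
              \<and> has_pd_v (\<lambda>q. nt Xt q ** M q ** X q) 0 p"
  proof -
  have sc_cases: "sc = id \<or> sc = cnj" using nt unfolding natural_inv_def by blast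
  have ntcong: "\<And>N1 N2. (\<forall>p\<in>U. N1 p = N2 p) \<Longrightarrow> (\<forall>p\<in>U. nt N1 p = nt N2 p)"
    using nt unfolding natural_inv_def by blast
  have ntinv: "\<And>N p. p \<in> U \<Longrightarrow> nt (nt N) p = N p" using nt unfolding natural_inv_def by blast
  have ntmul: "\<And>N1 N2 p. p \<in> U \<Longrightarrow> nt (\<lambda>q. N1 q ** N2 q) p = nt N2 p ** nt N1 p"
    using nt unfolding natural_inv_def by blast
  have ntsc: "\<And>f N p. p \<in> U \<Longrightarrow> nt (\<lambda>q. cscale (f q) (N q)) p = cscale (sc (f p)) (nt N p)"
    using nt unfolding natural_inv_def by blast
  have ntdr: "\<And>N. (\<forall>p\<in>U. \<exists>D. has_pd_rho N D p) \<Longrightarrow> (\<forall>p\<in>U. has_pd_rho (nt N) (nt (pd_rho N) p) p)"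
    using nt unfolding natural_inv_def by blast
  have ntdv: "\<And>N. (\<forall>p\<in>U. \<exists>D. has_pd_v N D p) \<Longrightarrow> (\<forall>p\<in>U. has_pd_v (nt N) (nt (pd_v N) p) p)"
    using nt unfolding natural_inv_def by blast
  have sc_of_real: "\<And>x. sc (of_real x) = of_real x" using sc_cases by auto
  have sc_div: "\<And>a b. sc (a / b) = sc a / sc b" using sc_cases by auto
  have sc_minus: "\<And>a. sc (- a) = - sc a" using sc_cases by auto
  have sc_sc: "\<And>a. sc (sc a) = a" using sc_cases by auto
  have ss: "of_real \<sigma> * of_real \<sigma> = (1::complex)" using sigma by auto
  have ex2: "\<forall>p\<in>U. (\<exists>D. has_pd_rho F D p) \<and> (\<exists>D. has_pd_v F D p)"
    if "Ck_on 2 U F" for F :: "real \<times> real \<Rightarrow> complex^'n^'n"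
    using that[unfolded Ck_on_def, rule_format, of "[]"] by simp
  have exr: "\<forall>p\<in>U. \<exists>D. has_pd_rho F D p" and exv: "\<forall>p\<in>U. \<exists>D. has_pd_v F D p"
    if "Ck_on 2 U F" for F :: "real \<times> real \<Rightarrow> complex^'n^'n"
    using ex2[OF that] by auto
  have hr: "\<forall>p\<in>U. has_pd_rho F (pd_rho F p) p" if "\<forall>p\<in>U. \<exists>D. has_pd_rho F D p"
    for F :: "real \<times> real \<Rightarrow> complex^'n^'n"
    using that pd_rho_eq by metis
  have hv: "\<forall>p\<in>U. has_pd_v F (pd_v F p) p" if "\<forall>p\<in>U. \<exists>D. has_pd_v F D p"
    for F :: "real \<times> real \<Rightarrow> complex^'n^'n"
    using that pd_v_eq by metis
  \<comment> \<open>the involution fixes the identity\<close>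
  have ntI: "nt (\<lambda>_. mat 1) q = mat 1" if q: "q \<in> U" for q
  proof -
    have "nt (\<lambda>q'. mat 1 ** nt (\<lambda>_. mat 1) q') q = nt (nt (\<lambda>_. mat 1)) q ** nt (\<lambda>_. mat 1) q"
      by (rule ntmul[OF q])
    also have "nt (nt (\<lambda>_. mat 1)) q = mat 1" using ntinv[OF q] by simp
    finally show ?thesis using ntinv[OF q] by simp
  qed
  have ntV_inv: "invertible (nt V q)" if q: "q \<in> U" for q
  proof -
    have "nt (\<lambda>q. matrix_inv (V q)) q ** nt V q = nt (\<lambda>q. V q ** matrix_inv (V q)) q"
      using ntmul[OF q] by simp
    also have "\<dots> = nt (\<lambda>_. mat 1) q"
      using ntcong[of "\<lambda>q. V q ** matrix_inv (V q)" "\<lambda>_. mat 1"] V_inv inv_mat q by auto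
    also have "\<dots> = mat 1" using ntI[OF q] .
    finally show ?thesis using invertible_left_inverse by blast
  qed
  have M_inv: "invertible (M q)" if q: "q \<in> U" for q
    using invertible_mult[OF ntV_inv[OF q] V_inv[rule_format, OF q]] M_def by simp
  have ntM: "nt M q = M q" if q: "q \<in> U" for q
    unfolding M_def using ntmul[OF q, of "nt V" V] ntinv[OF q, of V] by simp
  have exVr: "\<forall>p\<in>U. \<exists>D. has_pd_rho V D p" and exVv: "\<forall>p\<in>U. \<exists>D. has_pd_v V D p"
    using exr[OF V_C2] exv[OF V_C2] by auto
  have hMr: "has_pd_rho M (nt V q ** pd_rho V q + nt (pd_rho V) q ** V q) q" if q: "q \<in> U" for q
    unfolding M_def by (rule pd_rho_mult) (use ntdr[OF exVr] hr[OF exVr] q in auto)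
  have hMv: "has_pd_v M (nt V q ** pd_v V q + nt (pd_v V) q ** V q) q" if q: "q \<in> U" for q
    unfolding M_def by (rule pd_v_mult) (use ntdv[OF exVv] hv[OF exVv] q in auto)
  have exMr: "\<forall>p\<in>U. \<exists>D. has_pd_rho M D p" using hMr by blast
  have exMv: "\<forall>p\<in>U. \<exists>D. has_pd_v M D p" using hMv by blast
  have MAr: "M q ** fst (A q) = pd_rho M q" if q: "q \<in> U" for q
    unfolding A_def using inv_mat[OF M_inv[OF q]] by (simp add: matrix_mul_assoc)
  have MAv: "M q ** snd (A q) = pd_v M q" if q: "q \<in> U" for q
    unfolding A_def using inv_mat[OF M_inv[OF q]] by (simp add: matrix_mul_assoc)
  have exXr: "\<forall>p\<in>U. \<exists>D. has_pd_rho X D p" and exXv: "\<forall>p\<in>U. \<exists>D. has_pd_v X D p"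
    using exr[OF X_C2] exv[OF X_C2] by auto
  have exTr: "\<forall>p\<in>U. \<exists>D. has_pd_rho Xt D p" and exTv: "\<forall>p\<in>U. \<exists>D. has_pd_v Xt D p"
    using exr[OF Xt_C2] exv[OF Xt_C2] by auto
  \<comment> \<open>the linear systems\<close>
  have Xr: "pd_rho X q + fst (A q) ** X q = cscale (1 / \<phi> q) (pd_v X q)"
   and Xv: "pd_v X q + snd (A q) ** X q = cscale (- of_real \<sigma> / \<phi> q) (pd_rho X q)" if q: "q \<in> U" for q
  proof -
    have e1: "cscale (\<phi> q) (pd_rho X q + fst (A q) ** X q) = pd_v X q"
     and e2: "cscale (\<phi> q) (pd_v X q + snd (A q) ** X q) = cscale (- of_real \<sigma>) (pd_rho X q)"
      using X_eq[rule_format, OF q] by (simp_all add: dform_def hstar_def scaleR_cscale)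
    have nz: "\<phi> q \<noteq> 0" using phi_nz q by auto
    show "pd_rho X q + fst (A q) ** X q = cscale (1 / \<phi> q) (pd_v X q)"
      unfolding e1[symmetric] cscale_cscale using nz by (simp add: cscale_one)
    show "pd_v X q + snd (A q) ** X q = cscale (- of_real \<sigma> / \<phi> q) (pd_rho X q)"
      using arg_cong[OF e2, of "cscale (1 / \<phi> q)"] nz by (simp add: cscale_cscale cscale_one)
  qed
  have Tr: "pd_rho Xt q + fst (A q) ** Xt q = cscale (1 / chi q) (pd_v Xt q)"
   and Tv: "pd_v Xt q + snd (A q) ** Xt q = cscale (- of_real \<sigma> / chi q) (pd_rho Xt q)" if q: "q \<in> U" for q
  proof -
    have e1: "cscale (chi q) (pd_rho Xt q + fst (A q) ** Xt q) = pd_v Xt q"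
     and e2: "cscale (chi q) (pd_v Xt q + snd (A q) ** Xt q) = cscale (- of_real \<sigma>) (pd_rho Xt q)"
      using Xt_eq[rule_format, OF q] by (simp_all add: dform_def hstar_def scaleR_cscale)
    have nz: "chi q \<noteq> 0" using chi_nz q by auto
    show "pd_rho Xt q + fst (A q) ** Xt q = cscale (1 / chi q) (pd_v Xt q)"
      unfolding e1[symmetric] cscale_cscale using nz by (simp add: cscale_one)
    show "pd_v Xt q + snd (A q) ** Xt q = cscale (- of_real \<sigma> / chi q) (pd_rho Xt q)"
      using arg_cong[OF e2, of "cscale (1 / chi q)"] nz by (simp add: cscale_cscale cscale_one)
  qed
  \<comment> \<open>scalar identities\<close>
  have sc1: "sc (1 / chi q) = - of_real \<sigma> * \<phi> q" if q: "q \<in> U" for q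
  proof -
    have "sc (chi q) = - of_real \<sigma> / \<phi> q"
      using chi_phi q by (simp add: sc_div sc_minus sc_of_real sc_sc)
    moreover have "sc 1 = 1" using sc_of_real[of 1] by simp
    ultimately have "sc (1 / chi q) = 1 / (- of_real \<sigma> / \<phi> q)" by (simp add: sc_div)
    thus ?thesis using phi_nz q sigma by auto
  qed
  have sc2: "sc (- of_real \<sigma> / chi q) = \<phi> q" if q: "q \<in> U" for q
  proof -
    have "sc (chi q) = - of_real \<sigma> / \<phi> q"
      using chi_phi q by (simp add: sc_div sc_minus sc_of_real sc_sc)
    hence "sc (- of_real \<sigma> / chi q) = - of_real \<sigma> / (- of_real \<sigma> / \<phi> q)"
      by (simp add: sc_div sc_minus sc_of_real)
    thus ?thesis using phi_nz q sigma by auto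
  qed
  \<comment> \<open>W = M Xt\<close>
  define W where "W = (\<lambda>q. M q ** Xt q)"
  have hWr: "has_pd_rho W (M q ** pd_rho Xt q + pd_rho M q ** Xt q) q" if q: "q \<in> U" for q
    unfolding W_def by (rule pd_rho_mult) (use hMr hr[OF exMr] hr[OF exTr] q in auto)
  have hWv: "has_pd_v W (M q ** pd_v Xt q + pd_v M q ** Xt q) q" if q: "q \<in> U" for q
    unfolding W_def by (rule pd_v_mult) (use hMv hv[OF exMv] hv[OF exTv] q in auto)
  have pdWr: "pd_rho W q = cscale (1 / chi q) (M q ** pd_v Xt q)" if q: "q \<in> U" for q
  proof -
    have "pd_rho W q = M q ** pd_rho Xt q + pd_rho M q ** Xt q" using pd_rho_eq[OF hWr[OF q]] .
    also have "\<dots> = M q ** (pd_rho Xt q + fst (A q) ** Xt q)"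
      by (simp add: matrix_add_ldistrib matrix_mul_assoc MAr[OF q])
    also have "\<dots> = cscale (1 / chi q) (M q ** pd_v Xt q)" by (simp add: Tr[OF q] cscale_mult_right)
    finally show ?thesis .
  qed
  have pdWv: "pd_v W q = cscale (- of_real \<sigma> / chi q) (M q ** pd_rho Xt q)" if q: "q \<in> U" for q
  proof -
    have "pd_v W q = M q ** pd_v Xt q + pd_v M q ** Xt q" using pd_v_eq[OF hWv[OF q]] .
    also have "\<dots> = M q ** (pd_v Xt q + snd (A q) ** Xt q)"
      by (simp add: matrix_add_ldistrib matrix_mul_assoc MAv[OF q])
    also have "\<dots> = cscale (- of_real \<sigma> / chi q) (M q ** pd_rho Xt q)" by (simp add: Tv[OF q] cscale_mult_right)
    finally show ?thesis .
  qed
  have ntW: "\<forall>q\<in>U. nt W q = nt Xt q ** M q"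
    unfolding W_def using ntmul ntM by simp
  show ?thesis
  proof
    fix p assume p: "p \<in> U"
    define Xt' where "Xt' = nt Xt p"
    define P where "P = nt (pd_rho Xt) p"
    define Q where "Q = nt (pd_v Xt) p"
    define Mp where "Mp = M p"
    define Xp where "Xp = X p"
    define Xr' where "Xr' = pd_rho X p"
    define Xv' where "Xv' = pd_v X p"
    define a where "a = P ** (Mp ** Xp)"
    define b where "b = Q ** (Mp ** Xp)"
    define c where "c = Xt' ** (Mp ** Xr')"
    define e where "e = Xt' ** (Mp ** Xv')"
    define f where "f = \<phi> p"
    have fnz: "f \<noteq> 0" "f^2 + of_real \<sigma> \<noteq> 0" using phi_nz p f_def by auto
    \<comment> \<open>route 1\<close>
    have r1: "has_pd_rho (\<lambda>q. nt Xt q ** M q ** X q)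
        ((nt Xt p ** M p) ** pd_rho X p + (nt Xt p ** pd_rho M p + nt (pd_rho Xt) p ** M p) ** X p) p"
      by (intro pd_rho_mult) (use ntdr[OF exTr] hr[OF exMr] hr[OF exXr] p in auto)
    have v1: "has_pd_v (\<lambda>q. nt Xt q ** M q ** X q)
        ((nt Xt p ** M p) ** pd_v X p + (nt Xt p ** pd_v M p + nt (pd_v Xt) p ** M p) ** X p) p"
      by (intro pd_v_mult) (use ntdv[OF exTv] hv[OF exMv] hv[OF exXv] p in auto)
    have R1: "(nt Xt p ** M p) ** pd_rho X p + (nt Xt p ** pd_rho M p + nt (pd_rho Xt) p ** M p) ** X p
        = a + cscale (1 / f) e"
    proof -
      have "(nt Xt p ** M p) ** pd_rho X p + (nt Xt p ** pd_rho M p + nt (pd_rho Xt) p ** M p) ** X p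
          = Xt' ** (Mp ** (pd_rho X p + fst (A p) ** X p)) + a"
        by (simp add: Xt'_def P_def Mp_def Xp_def a_def mm_add_rdistrib matrix_add_ldistrib
            matrix_mul_assoc MAr[OF p])
      thus ?thesis by (simp add: Xr[OF p] cscale_mult_right e_def Xv'_def f_def)
    qed
    have S1: "(nt Xt p ** M p) ** pd_v X p + (nt Xt p ** pd_v M p + nt (pd_v Xt) p ** M p) ** X p
        = b + cscale (- of_real \<sigma> / f) c"
    proof -
      have "(nt Xt p ** M p) ** pd_v X p + (nt Xt p ** pd_v M p + nt (pd_v Xt) p ** M p) ** X p
          = Xt' ** (Mp ** (pd_v X p + snd (A p) ** X p)) + b"
        by (simp add: Xt'_def Q_def Mp_def Xp_def b_def mm_add_rdistrib matrix_add_ldistrib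
            matrix_mul_assoc MAv[OF p])
      thus ?thesis by (simp add: Xv[OF p] cscale_mult_right c_def Xr'_def f_def)
    qed
    \<comment> \<open>route 2\<close>
    have exWr: "\<forall>p\<in>U. \<exists>D. has_pd_rho W D p" using hWr by blast
    have exWv: "\<forall>p\<in>U. \<exists>D. has_pd_v W D p" using hWv by blast
    have ntpdWr: "nt (pd_rho W) p = cscale (- of_real \<sigma> * f) (Q ** Mp)"
    proof -
      have "nt (pd_rho W) p = nt (\<lambda>q. cscale (1 / chi q) (M q ** pd_v Xt q)) p"
        using ntcong[of "pd_rho W" "\<lambda>q. cscale (1 / chi q) (M q ** pd_v Xt q)"] pdWr p by auto
      also have "\<dots> = cscale (sc (1 / chi p)) (nt (\<lambda>q. M q ** pd_v Xt q) p)" by (rule ntsc[OF p])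
      also have "\<dots> = cscale (- of_real \<sigma> * f) (Q ** Mp)"
        using ntmul[OF p, of M "pd_v Xt"] ntM[OF p] sc1[OF p] by (simp add: Q_def Mp_def f_def)
      finally show ?thesis .
    qed
    have ntpdWv: "nt (pd_v W) p = cscale f (P ** Mp)"
    proof -
      have "nt (pd_v W) p = nt (\<lambda>q. cscale (- of_real \<sigma> / chi q) (M q ** pd_rho Xt q)) p"
        using ntcong[of "pd_v W" "\<lambda>q. cscale (- of_real \<sigma> / chi q) (M q ** pd_rho Xt q)"] pdWv p by auto
      also have "\<dots> = cscale (sc (- of_real \<sigma> / chi p)) (nt (\<lambda>q. M q ** pd_rho Xt q) p)" by (rule ntsc[OF p])
      also have "\<dots> = cscale f (P ** Mp)"
        using ntmul[OF p, of M "pd_rho Xt"] ntM[OF p] sc2[OF p] by (simp add: P_def Mp_def f_def)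
      finally show ?thesis .
    qed
    have hA: "has_pd_rho (\<lambda>q. nt Xt q ** M q) (nt (pd_rho W) p) p"
      by (rule pd_rho_transfer[OF U_open p ntW]) (use ntdr[OF exWr] p in auto)
    have hB: "has_pd_v (\<lambda>q. nt Xt q ** M q) (nt (pd_v W) p) p"
      by (rule pd_v_transfer[OF U_open p ntW]) (use ntdv[OF exWv] p in auto)
    have r2: "has_pd_rho (\<lambda>q. nt Xt q ** M q ** X q)
        ((nt Xt p ** M p) ** pd_rho X p + nt (pd_rho W) p ** X p) p"
      by (intro pd_rho_mult hA) (use hr[OF exXr] p in auto)
    have v2: "has_pd_v (\<lambda>q. nt Xt q ** M q ** X q)
        ((nt Xt p ** M p) ** pd_v X p + nt (pd_v W) p ** X p) p"
      by (intro pd_v_mult hB) (use hv[OF exXv] p in auto)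
    have R2: "(nt Xt p ** M p) ** pd_rho X p + nt (pd_rho W) p ** X p = c + cscale (- of_real \<sigma> * f) b"
      by (simp add: ntpdWr cscale_mult_left matrix_mul_assoc c_def b_def Xt'_def Mp_def Xr'_def Xp_def)
    have S2: "(nt Xt p ** M p) ** pd_v X p + nt (pd_v W) p ** X p = e + cscale f a"
      by (simp add: ntpdWv cscale_mult_left matrix_mul_assoc e_def a_def Xt'_def Mp_def Xv'_def Xp_def)
    have eqR: "a + cscale (1 / f) e = c + cscale (- of_real \<sigma> * f) b"
      using pd_rho_uniq[OF r1 r2] R1 R2 by simp
    have eqS: "b + cscale (- of_real \<sigma> / f) c = e + cscale f a"
      using pd_v_uniq[OF v1 v2] S1 S2 by simp
    have zero: "a + cscale (1 / f) e = 0 \<and> b + cscale (- of_real \<sigma> / f) c = 0"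
    proof -
      have "\<forall>i j. (b + cscale (- of_real \<sigma> / f) c) $ i $ j = 0 \<and> (a + cscale (1 / f) e) $ i $ j = 0"
      proof (intro allI)
        fix i j
        have h1: "a$i$j + e$i$j / f = c$i$j - of_real \<sigma> * f * b$i$j"
          using arg_cong[OF eqR, of "\<lambda>N. N $ i $ j"] by (simp add: cscale_nth)
        have h2: "b$i$j - of_real \<sigma> * c$i$j / f = e$i$j + f * a$i$j"
          using arg_cong[OF eqS, of "\<lambda>N. N $ i $ j"] by (simp add: cscale_nth)
        show "(b + cscale (- of_real \<sigma> / f) c) $ i $ j = 0 \<and> (a + cscale (1 / f) e) $ i $ j = 0"
          using scalar_alg[OF ss fnz h1 h2] by (simp add: cscale_nth)
      qed
      thus ?thesis by (simp add: vec_eq_iff)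
    qed
    show "has_pd_rho (\<lambda>q. nt Xt q ** M q ** X q) 0 p \<and> has_pd_v (\<lambda>q. nt Xt q ** M q ** X q) 0 p"
      using r1 v1 R1 S1 zero by simp
  qed
qed

end
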